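(* For $\theta>0$ and $\sigma>0$, \[\rho_2(\theta,\sigma^2):=\int_{\mathbb{R}^3}\mathbb{E}\,\psi\Big(\theta\int_0^1\frac{ds}{|x+X_0(s)|^2}\Big)dx\le\frac83\pi^{3/2}\theta^{3/2}.\]
   Context: $X_0=\sigma W$ where $W$ is a standard $3$-dimensional Brownian motion from $0$; $\mathbb{E}$ is expectation over $X_0$. $\psi(a)=e^{-a}-1+a$ for $a\ge0$. *)

theory Defs
  imports "HOL-Probability.Probability"
begin

definition psi :: "real \<Rightarrow> real" where
  "psi a = exp (- a) - 1 + a"

text \<open>Extension of psi to [0, infinity]: psi(infinity) = infinity (psi(a) -> infinity as a -> infinity).\<close>
definition psi_ext :: "ennreal \<Rightarrow> ennreal" where
  "psi_ext a = (if a = \<top> then \<top> else ennreal (psi (enn2real a)))"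

definition std_BM3 :: "'a measure \<Rightarrow> (real \<Rightarrow> 'a \<Rightarrow> real^3) \<Rightarrow> bool" where
  "std_BM3 M W \<longleftrightarrow>
     prob_space M \<and>
     (\<forall>t. W t \<in> borel_measurable M) \<and>
     (\<forall>\<omega>\<in>space M. W 0 \<omega> = 0 \<and> continuous_on {0..} (\<lambda>t. W t \<omega>)) \<and>
     (\<forall>(ts :: nat \<Rightarrow> real) n. 0 \<le> ts 0 \<longrightarrow> (\<forall>i<n. ts i < ts (Suc i)) \<longrightarrow>
        prob_space.indep_vars M (\<lambda>_. borel)
          (\<lambda>(k, i) \<omega>. (W (ts (Suc i)) \<omega> - W (ts i) \<omega>) $ k) (UNIV \<times> {..<n})) \<and>
     (\<forall>s t k. 0 \<le> s \<longrightarrow> s < t \<longrightarrow>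
        distributed M lborel (\<lambda>\<omega>. (W t \<omega> - W s \<omega>) $ k)
          (\<lambda>x. ennreal (normal_density 0 (sqrt (t - s)) x)))"

end

theory Submission
  imports Defs
begin


lemma psi_nonneg: "0 \<le> psi a" for a :: real
  unfolding psi_def using exp_ge_add_one_self[of "-a"] by simp

lemma psi_le: "0 \<le> a \<Longrightarrow> psi a \<le> a"
  unfolding psi_def by simp

lemma psi_convex: "convex_on UNIV psi"
proof (rule convex_on_realI[where f'="\<lambda>a. 1 - exp (-a)"])
  show "connected (UNIV::real set)" by simp
  fix x :: real show "(psi has_real_derivative 1 - exp (- x)) (at x)"
    unfolding psi_def[abs_def] by (auto intro!: derivative_eq_intros)
next
  fix x y :: real assume "x \<le> y" then show "1 - exp (- x) \<le> 1 - exp (- y)" by simp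
qed

lemma psi_cont: "continuous_on UNIV psi"
  unfolding psi_def[abs_def] by (intro continuous_intros)

lemma psi_meas[measurable]: "psi \<in> borel_measurable borel"
  using psi_cont by (simp add: borel_measurable_continuous_onI)

lemma psi_ext_meas[measurable]: "psi_ext \<in> borel_measurable borel"
  unfolding psi_ext_def[abs_def] by measurable

lemma psi_ext_ennreal: "0 \<le> a \<Longrightarrow> psi_ext (ennreal a) = ennreal (psi a)"
  by (simp add: psi_ext_def)

lemma psi_ext_ge: "a \<le> psi_ext a + 1"
proof (cases "a = \<top>")
  case True then show ?thesis by (simp add: psi_ext_def)
next
  case False
  then obtain r where r: "a = ennreal r" "0 \<le> r" by (cases a) auto
  have "r \<le> psi r + 1" unfolding psi_def by simp
  then have "ennreal r \<le> ennreal (psi r + 1)" by (rule ennreal_leI)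
  then show ?thesis using r psi_nonneg[of r] by (simp add: psi_ext_def ennreal_plus)
qed

lemma one_minus_exp_rep: "0 \<le> u \<Longrightarrow> ennreal (1 - exp (-u)) = (\<integral>\<^sup>+v. ennreal (exp (-v)) * indicator {0..u} v \<partial>lborel)"
  by (subst nn_integral_FTC_Icc[where F="\<lambda>v. - exp (-v)"]) (auto intro!: derivative_eq_intros)

lemma psi_rep: "0 \<le> a \<Longrightarrow> ennreal (psi a) = (\<integral>\<^sup>+u. ennreal (1 - exp (-u)) * indicator {0..a} u \<partial>lborel)"
  by (subst nn_integral_FTC_Icc[where F="\<lambda>u. u + exp (-u)"]) (auto intro!: derivative_eq_intros simp: psi_def algebra_simps)

lemma tail_int: "0 < v \<Longrightarrow> (\<integral>\<^sup>+u. ennreal (u powr (-3/2)) * indicator {v..} u \<partial>lborel) = ennreal (2 * v powr (-1/2))"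
proof -
  assume v: "0 < v"
  have "(\<integral>\<^sup>+u. ennreal (u powr (-3/2)) * indicator {v..} u \<partial>lborel) = 0 - (- 2 * v powr (-1/2))"
  proof (rule nn_integral_FTC_atLeast[where F="\<lambda>u. - 2 * u powr (-1/2)"])
    show "(\<lambda>u::real. u powr (-3/2)) \<in> borel_measurable borel" by measurable
    fix x assume "v \<le> x"
    then have "x > 0" using v by simp
    then have "((\<lambda>u. - 2 * u powr (-1/2)) has_real_derivative (-2) * ((-1/2) * x powr (-1/2 - 1))) (at x)"
      by (intro DERIV_cmult has_real_derivative_powr)
    then show "((\<lambda>u. - 2 * u powr (-1/2)) has_real_derivative x powr (-3/2)) (at x)"
      by simp
    show "0 \<le> x powr (-3/2)" by simp
  next
    show "((\<lambda>u::real. - 2 * u powr (-1/2)) \<longlongrightarrow> 0) at_top"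
      using tendsto_mult_right_zero[OF tendsto_neg_powr[of "-1/2" "\<lambda>x. x" at_top], of "-2"]
      by (simp add: filterlim_ident)
  qed
  then show ?thesis by simp
qed

lemma gamma_half_int: "(\<integral>\<^sup>+v. ennreal (v powr (-1/2) / exp v) * indicator {0..} v \<partial>lborel) = ennreal (sqrt pi)"
proof -
  have "((\<lambda>t::real. t powr (1/2 - 1) / exp t) has_integral Gamma (1/2)) {0..}"
    by (rule Gamma_integral_real) (simp add: field_simps)
  then have HI: "((\<lambda>t::real. if t \<in> {0..} then t powr (-1/2) / exp t else 0) has_integral sqrt pi) UNIV"
    unfolding has_integral_restrict_UNIV by (simp add: Gamma_one_half_real)
  have "integral\<^sup>N lborel (\<lambda>t::real. if t \<in> {0..} then t powr (-1/2) / exp t else 0) = sqrt pi"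
    by (rule nn_integral_has_integral_lborel[OF _ _ HI]) auto
  then show ?thesis
    by (subst (asm) nn_integral_cong[where v="\<lambda>v. ennreal (v powr (-1/2) / exp v) * indicator {0..} v"]) (auto split: split_indicator)
qed



lemma cball_meas:
  assumes u: "0 < u" and th: "0 < \<theta>"
  shows "emeasure lborel {x::real^3. u * (norm x)\<^sup>2 \<le> \<theta>} = ennreal (4/3 * pi * \<theta> powr (3/2) * u powr (-3/2))"
proof -
  have eq: "{x::real^3. u * (norm x)\<^sup>2 \<le> \<theta>} = cball 0 (sqrt (\<theta>/u))"
  proof -
    have "u * (norm x)\<^sup>2 \<le> \<theta> \<longleftrightarrow> norm x \<le> sqrt (\<theta>/u)" for x :: "real^3"
    proof -
      have "norm x \<le> sqrt (\<theta>/u) \<longleftrightarrow> sqrt ((norm x)\<^sup>2) \<le> sqrt (\<theta>/u)" by simp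
      also have "\<dots> \<longleftrightarrow> (norm x)\<^sup>2 \<le> \<theta>/u" by (rule real_sqrt_le_iff)
      also have "\<dots> \<longleftrightarrow> u * (norm x)\<^sup>2 \<le> \<theta>" using u by (simp add: pos_le_divide_eq mult.commute)
      finally show ?thesis by simp
    qed
    then show ?thesis by (auto simp: cball_def dist_norm)
  qed
  have "sqrt (\<theta>/u) ^ 3 = \<theta> powr (3/2) * u powr (-3/2)"
  proof -
    have p: "0 < \<theta>/u" using u th by simp
    have "sqrt (\<theta>/u) ^ 3 = ((\<theta>/u) powr (1/2)) ^ 3"
      using p by (simp add: powr_half_sqrt)
    also have "\<dots> = (\<theta>/u) powr (of_nat 3 * (1/2))"
      using u th by (intro powr_power) simp
    also have "\<dots> = \<theta> powr (3/2) / u powr (3/2)"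
      by (simp add: powr_divide)
    also have "\<dots> = \<theta> powr (3/2) * u powr (-3/2)"
      by (simp add: powr_minus_divide)
    finally show ?thesis .
  qed
  then show ?thesis
    unfolding eq using u th
    by (subst emeasure_cball) (auto simp: unit_ball_vol_3)
qed



lemma pi_powr: "pi powr (3/2) = pi * sqrt pi"
proof -
  have "pi powr (3/2) = pi powr (1 + 1/2)" by simp
  also have "\<dots> = pi powr 1 * pi powr (1/2)" by (rule powr_add)
  also have "\<dots> = pi * sqrt pi" by (simp add: powr_half_sqrt)
  finally show ?thesis .
qed

lemma K_eq:
  assumes th: "0 < \<theta>"
  shows "(\<integral>\<^sup>+x. psi_ext (ennreal \<theta> * inverse (ennreal ((norm (x::real^3))\<^sup>2))) \<partial>lborel)
     = ennreal (8/3 * pi powr (3/2) * \<theta> powr (3/2))"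
proof -
  define c where "c = 4/3 * pi * \<theta> powr (3/2)"
  have c: "0 < c" unfolding c_def using th by simp
  define S where "S = {p::((real^3) \<times> real). 0 \<le> snd p \<and> snd p * (norm (fst p))\<^sup>2 \<le> \<theta>}"
  have "S = {p \<in> space (lborel \<Otimes>\<^sub>M lborel). 0 \<le> snd p \<and> snd p * (norm (fst p))\<^sup>2 \<le> \<theta>}"
    by (simp add: S_def space_pair_measure)
  also have "\<dots> \<in> sets (lborel \<Otimes>\<^sub>M lborel)" by measurable
  finally have S_meas[measurable]: "S \<in> sets (lborel \<Otimes>\<^sub>M lborel)" .
  have PS1: "pair_sigma_finite (lborel::(real^3) measure) (lborel::real measure)"
    by (simp add: pair_sigma_finite_def lborel.sigma_finite_measure_axioms)
  have PS2: "pair_sigma_finite (lborel::real measure) (lborel::real measure)"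
    by (simp add: pair_sigma_finite_def lborel.sigma_finite_measure_axioms)
  have step1: "AE x in lborel. psi_ext (ennreal \<theta> * inverse (ennreal ((norm x)\<^sup>2)))
      = (\<integral>\<^sup>+u. ennreal (1 - exp (-u)) * indicator S (x,u) \<partial>lborel)"
    using AE_lborel_singleton[of "0::real^3"]
  proof eventually_elim
    case (elim x)
    then have n: "0 < (norm x)\<^sup>2" by simp
    have "ennreal \<theta> * inverse (ennreal ((norm x)\<^sup>2)) = ennreal (\<theta> / (norm x)\<^sup>2)"
      using n th by (simp add: inverse_ennreal ennreal_mult[symmetric] divide_inverse)
    then have "psi_ext (ennreal \<theta> * inverse (ennreal ((norm x)\<^sup>2))) = ennreal (psi (\<theta> / (norm x)\<^sup>2))"
      using th n by (simp add: psi_ext_ennreal)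
    also have "\<dots> = (\<integral>\<^sup>+u. ennreal (1 - exp (-u)) * indicator {0..\<theta> / (norm x)\<^sup>2} u \<partial>lborel)"
      by (rule psi_rep) (use th n in simp)
    also have "\<dots> = (\<integral>\<^sup>+u. ennreal (1 - exp (-u)) * indicator S (x,u) \<partial>lborel)"
      by (intro nn_integral_cong) (use n in \<open>auto simp: S_def pos_le_divide_eq le_divide_eq mult.commute split: split_indicator\<close>)
    finally show ?case .
  qed
  have "(\<integral>\<^sup>+x. psi_ext (ennreal \<theta> * inverse (ennreal ((norm (x::real^3))\<^sup>2))) \<partial>lborel)
      = (\<integral>\<^sup>+x. (\<integral>\<^sup>+u. ennreal (1 - exp (-u)) * indicator S (x,u) \<partial>lborel) \<partial>lborel)"
    by (rule nn_integral_cong_AE[OF step1])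
  also have "\<dots> = (\<integral>\<^sup>+u. (\<integral>\<^sup>+x. ennreal (1 - exp (-u)) * indicator S (x,u) \<partial>lborel) \<partial>lborel)"
    by (rule pair_sigma_finite.Fubini'[OF PS1, of "\<lambda>x u. ennreal (1 - exp (-u)) * indicator S (x,u)", symmetric]) measurable
  also have "\<dots> = (\<integral>\<^sup>+u. ennreal ((1 - exp (-u)) * c * u powr (-3/2)) * indicator {0<..} u \<partial>lborel)"
  proof (intro nn_integral_cong)
    fix u :: real
    consider "u < 0" | "u = 0" | "u > 0" by linarith
    then show "(\<integral>\<^sup>+x. ennreal (1 - exp (-u)) * indicator S (x,u) \<partial>lborel)
        = ennreal ((1 - exp (-u)) * c * u powr (-3/2)) * indicator {0<..} u"
    proof cases
      case 1 then show ?thesis by (simp add: S_def indicator_def)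
    next
      case 2 then show ?thesis by simp
    next
      case 3
      have "{x::real^3. u * (norm x)\<^sup>2 \<le> \<theta>} = {x \<in> space lborel. u * (norm x)\<^sup>2 \<le> \<theta>}" by simp
      also have "\<dots> \<in> sets lborel" by measurable
      finally have set: "{x::real^3. u * (norm x)\<^sup>2 \<le> \<theta>} \<in> sets lborel" .
      have "(\<integral>\<^sup>+x. ennreal (1 - exp (-u)) * indicator S (x,u) \<partial>lborel)
          = (\<integral>\<^sup>+x. ennreal (1 - exp (-u)) * indicator {x::real^3. u * (norm x)\<^sup>2 \<le> \<theta>} x \<partial>lborel)"
        using 3 by (intro nn_integral_cong) (simp add: S_def indicator_def)
      also have "\<dots> = ennreal (1 - exp (-u)) * emeasure lborel {x::real^3. u * (norm x)\<^sup>2 \<le> \<theta>}"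
        by (rule nn_integral_cmult_indicator[OF set])
      also have "\<dots> = ennreal (1 - exp (-u)) * ennreal (c * u powr (-3/2))"
        using 3 th by (simp add: cball_meas c_def)
      also have "\<dots> = ennreal ((1 - exp (-u)) * c * u powr (-3/2)) * indicator {0<..} u"
        using 3 c by (simp add: ennreal_mult[symmetric] mult.assoc)
      finally show ?thesis .
    qed
  qed
  also have "\<dots> = (\<integral>\<^sup>+u. (\<integral>\<^sup>+v. ennreal (exp (-v)) * indicator {0..u} v * (ennreal (c * u powr (-3/2)) * indicator {0<..} u) \<partial>lborel) \<partial>lborel)"
  proof (intro nn_integral_cong)
    fix u :: real
    show "ennreal ((1 - exp (-u)) * c * u powr (-3/2)) * indicator {0<..} u
      = (\<integral>\<^sup>+v. ennreal (exp (-v)) * indicator {0..u} v * (ennreal (c * u powr (-3/2)) * indicator {0<..} u) \<partial>lborel)"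
    proof (cases "u > 0")
      case True
      have "(\<integral>\<^sup>+v. ennreal (exp (-v)) * indicator {0..u} v * (ennreal (c * u powr (-3/2)) * indicator {0<..} u) \<partial>lborel)
          = (\<integral>\<^sup>+v. ennreal (exp (-v)) * indicator {0..u} v \<partial>lborel) * (ennreal (c * u powr (-3/2)) * indicator {0<..} u)"
        by (rule nn_integral_multc) measurable
      also have "\<dots> = ennreal (1 - exp (-u)) * (ennreal (c * u powr (-3/2)) * indicator {0<..} u)"
        using True by (simp add: one_minus_exp_rep)
      also have "\<dots> = ennreal ((1 - exp (-u)) * c * u powr (-3/2)) * indicator {0<..} u"
        using True c by (simp add: ennreal_mult[symmetric] mult.assoc)
      finally show ?thesis by simp
    next
      case False then show ?thesis by simp
    qed
  qed
  also have "\<dots> = (\<integral>\<^sup>+v. (\<integral>\<^sup>+u. ennreal (exp (-v)) * indicator {0..u} v * (ennreal (c * u powr (-3/2)) * indicator {0<..} u) \<partial>lborel) \<partial>lborel)"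
  proof -
    have eq: "case_prod (\<lambda>u v. ennreal (exp (-v)) * indicator {0..u} v * (ennreal (c * u powr (-3/2)) * indicator {0<..} u))
      = (\<lambda>p. ennreal (exp (-snd p)) * (if 0 \<le> snd p \<and> snd p \<le> fst p then 1 else 0) * (ennreal (c * fst p powr (-3/2)) * (if 0 < fst p then 1 else 0)))"
      by (auto simp: fun_eq_iff indicator_def)
    have M2: "case_prod (\<lambda>u v. ennreal (exp (-v)) * indicator {0..u} v * (ennreal (c * u powr (-3/2)) * indicator {0<..} u))
       \<in> borel_measurable (lborel \<Otimes>\<^sub>M lborel)"
      unfolding eq by measurable
    show ?thesis by (rule pair_sigma_finite.Fubini'[OF PS2 M2, symmetric])
  qed
  also have "\<dots> = (\<integral>\<^sup>+v. ennreal (2 * c) * (ennreal (v powr (-1/2) / exp v) * indicator {0..} v) \<partial>lborel)"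
  proof (rule nn_integral_cong_AE)
    show "AE v in lborel. (\<integral>\<^sup>+u. ennreal (exp (-v)) * indicator {0..u} v * (ennreal (c * u powr (-3/2)) * indicator {0<..} u) \<partial>lborel)
       = ennreal (2 * c) * (ennreal (v powr (-1/2) / exp v) * indicator {0..} v)"
      using AE_lborel_singleton[of "0::real"]
    proof eventually_elim
      case (elim v)
      show ?case
      proof (cases "v > 0")
        case False
        with elim have "v < 0" by simp
        then show ?thesis by (simp add: indicator_def)
      next
        case True
        have "(\<integral>\<^sup>+u. ennreal (exp (-v)) * indicator {0..u} v * (ennreal (c * u powr (-3/2)) * indicator {0<..} u) \<partial>lborel)
           = (\<integral>\<^sup>+u. ennreal (exp (-v) * c) * (ennreal (u powr (-3/2)) * indicator {v..} u) \<partial>lborel)"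
          using True c by (intro nn_integral_cong) (auto simp: indicator_def ennreal_mult[symmetric] mult_ac)
        also have "\<dots> = ennreal (exp (-v) * c) * (\<integral>\<^sup>+u. ennreal (u powr (-3/2)) * indicator {v..} u \<partial>lborel)"
          by (rule nn_integral_cmult) measurable
        also have "\<dots> = ennreal (exp (-v) * c) * ennreal (2 * v powr (-1/2))"
          using tail_int[OF True] by simp
        also have "\<dots> = ennreal (2 * c) * (ennreal (v powr (-1/2) / exp v) * indicator {0..} v)"
          using True c by (simp add: ennreal_mult[symmetric] exp_minus field_simps)
        finally show ?thesis .
      qed
    qed
  qed
  also have "\<dots> = ennreal (2 * c) * (\<integral>\<^sup>+v. ennreal (v powr (-1/2) / exp v) * indicator {0..} v \<partial>lborel)"
    by (rule nn_integral_cmult) measurable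
  also have "\<dots> = ennreal (2 * c * sqrt pi)"
    using c gamma_half_int by (simp add: ennreal_mult[symmetric])
  also have "2 * c * sqrt pi = 8/3 * pi powr (3/2) * \<theta> powr (3/2)"
    unfolding c_def pi_powr by simp
  finally show ?thesis .
qed



lemma psi_jensen:
  fixes q :: "real \<Rightarrow> ennreal"
  assumes q[measurable]: "q \<in> borel_measurable lborel"
  shows "psi_ext (\<integral>\<^sup>+s. q s * indicator {0..1} s \<partial>lborel) \<le> (\<integral>\<^sup>+s. psi_ext (q s) * indicator {0..1} s \<partial>lborel)"
proof -
  define P where "P = restrict_space lborel {0..1::real}"
  have P: "prob_space P" unfolding P_def by (rule prob_space_restrict_space) auto
  interpret P: prob_space P by (rule P)
  have I: "(\<integral>\<^sup>+s. f s * indicator {0..1} s \<partial>lborel) = (\<integral>\<^sup>+s. f s \<partial>P)" for f :: "real \<Rightarrow> ennreal"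
    unfolding P_def by (rule nn_integral_restrict_space[symmetric]) auto
  have qP[measurable]: "q \<in> borel_measurable P" unfolding P_def by (rule measurable_restrict_space1) (rule q)
  have pqP[measurable]: "(\<lambda>s. psi_ext (q s)) \<in> borel_measurable P" by measurable
  have main: "psi_ext (\<integral>\<^sup>+s. q s \<partial>P) \<le> (\<integral>\<^sup>+s. psi_ext (q s) \<partial>P)"
  proof (cases "(\<integral>\<^sup>+s. q s \<partial>P) = \<top>")
    case True
    have "(\<integral>\<^sup>+s. q s \<partial>P) \<le> (\<integral>\<^sup>+s. psi_ext (q s) + 1 \<partial>P)"
      by (intro nn_integral_mono) (rule psi_ext_ge)
    also have "\<dots> = (\<integral>\<^sup>+s. psi_ext (q s) \<partial>P) + 1"
      by (subst nn_integral_add) (auto simp: P.emeasure_space_1)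
    finally have "(\<integral>\<^sup>+s. psi_ext (q s) \<partial>P) = \<top>" using True by (auto simp: top_unique)
    then show ?thesis by simp
  next
    case False
    define r where "r = (\<lambda>s. enn2real (q s))"
    have rm[measurable]: "r \<in> borel_measurable P" unfolding r_def by measurable
    have AEfin0: "AE s in P. q s \<noteq> \<infinity>" by (rule nn_integral_PInf_AE[OF qP]) (use False in simp)
    then have AEfin: "AE s in P. q s \<noteq> \<top>" by simp
    have AEr: "AE s in P. q s = ennreal (r s)"
      using AEfin by eventually_elim (auto simp: r_def less_top)
    have eqr: "(\<integral>\<^sup>+s. q s \<partial>P) = (\<integral>\<^sup>+s. ennreal (r s) \<partial>P)"
      by (rule nn_integral_cong_AE[OF AEr])
    have r_nn: "0 \<le> r s" for s unfolding r_def by simp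
    have rint: "integrable P r"
      by (rule integrableI_nonneg) (use False eqr r_nn in \<open>auto simp: top.not_eq_extremum\<close>)
    have prm[measurable]: "(\<lambda>s. psi (r s)) \<in> borel_measurable P" by measurable
    have print: "integrable P (\<lambda>s. psi (r s))"
      by (rule Bochner_Integration.integrable_bound[OF rint prm])
         (auto simp: psi_nonneg r_nn psi_le)
    have jen: "psi (P.expectation r) \<le> P.expectation (\<lambda>s. psi (r s))"
      by (rule P.jensens_inequality[where I=UNIV]) (use rint print psi_convex in auto)
    have e1: "(\<integral>\<^sup>+s. q s \<partial>P) = ennreal (P.expectation r)"
      unfolding eqr by (rule nn_integral_eq_integral[OF rint]) (simp add: r_nn)
    have e2: "(\<integral>\<^sup>+s. psi_ext (q s) \<partial>P) = ennreal (P.expectation (\<lambda>s. psi (r s)))"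
    proof -
      have "(\<integral>\<^sup>+s. psi_ext (q s) \<partial>P) = (\<integral>\<^sup>+s. ennreal (psi (r s)) \<partial>P)"
        using AEr by (intro nn_integral_cong_AE) (auto elim!: eventually_mono simp: psi_ext_ennreal r_nn)
      also have "\<dots> = ennreal (P.expectation (\<lambda>s. psi (r s)))"
        by (rule nn_integral_eq_integral[OF print]) (simp add: psi_nonneg)
      finally show ?thesis .
    qed
    have "0 \<le> P.expectation r" by (rule integral_nonneg_AE) (simp add: r_nn)
    then show ?thesis unfolding e1 e2 using jen by (simp add: psi_ext_ennreal ennreal_leI)
  qed
  then show ?thesis by (simp add: I)
qed

lemma joint_meas:
  fixes W :: "real \<Rightarrow> 'a \<Rightarrow> 'b::metric_space"
  assumes Wm: "\<And>t. W t \<in> borel_measurable M"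
    and Wc: "\<And>\<omega>. \<omega> \<in> space M \<Longrightarrow> continuous_on {0..} (\<lambda>t. W t \<omega>)"
  shows "(\<lambda>p. W (max 0 (snd p)) (fst p)) \<in> borel_measurable (M \<Otimes>\<^sub>M lborel)"
proof (rule borel_measurable_LIMSEQ_metric)
  fix i :: nat
  show "(\<lambda>p. W (max 0 (real_of_int \<lfloor>real (Suc i) * snd p\<rfloor> / real (Suc i))) (fst p)) \<in> borel_measurable (M \<Otimes>\<^sub>M lborel)"
  proof (rule measurable_compose_countable'[where I=UNIV and f="\<lambda>k p. W (max 0 (real_of_int k / real (Suc i))) (fst p)"
        and g="\<lambda>p. \<lfloor>real (Suc i) * snd p\<rfloor>"])
    fix k :: int
    show "(\<lambda>p. W (max 0 (real_of_int k / real (Suc i))) (fst p)) \<in> borel_measurable (M \<Otimes>\<^sub>M lborel)"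
      by (rule measurable_compose[OF measurable_fst Wm])
  next
    show "(\<lambda>p. \<lfloor>real (Suc i) * snd p\<rfloor>) \<in> measurable (M \<Otimes>\<^sub>M lborel) (count_space UNIV)"
      by measurable
  qed simp
next
  fix p :: "'a \<times> real" assume p: "p \<in> space (M \<Otimes>\<^sub>M lborel)"
  obtain \<omega> and s :: real where ps: "p = (\<omega>, s)" by (cases p)
  with p have \<omega>: "\<omega> \<in> space M" by (simp add: space_pair_measure)
  define t where "t = (\<lambda>i::nat. real_of_int \<lfloor>real (Suc i) * s\<rfloor> / real (Suc i))"
  have t: "t \<longlonglongrightarrow> s"
  proof (rule tendsto_sandwich[where f="\<lambda>i. s - inverse (real (Suc i))" and h="\<lambda>i. s"])
    show "\<forall>\<^sub>F i in sequentially. s - inverse (real (Suc i)) \<le> t i"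
    proof (intro always_eventually allI)
      fix i :: nat
      have "real (Suc i) * s - 1 \<le> real_of_int \<lfloor>real (Suc i) * s\<rfloor>" by linarith
      then have "(real (Suc i) * s - 1) / real (Suc i) \<le> t i"
        unfolding t_def by (intro divide_right_mono) auto
      then show "s - inverse (real (Suc i)) \<le> t i" by (simp add: field_simps)
    qed
    show "\<forall>\<^sub>F i in sequentially. t i \<le> s"
    proof (intro always_eventually allI)
      fix i :: nat
      have "real_of_int \<lfloor>real (Suc i) * s\<rfloor> \<le> real (Suc i) * s" by linarith
      then show "t i \<le> s" unfolding t_def by (simp add: divide_le_eq mult.commute)
    qed
    show "(\<lambda>i. s - inverse (real (Suc i))) \<longlonglongrightarrow> s"
      using tendsto_diff[OF tendsto_const LIMSEQ_inverse_real_of_nat, of s] by simp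
  qed simp
  have "(\<lambda>i. W (max 0 (t i)) \<omega>) \<longlonglongrightarrow> W (max 0 s) \<omega>"
    by (rule continuous_on_tendsto_compose[OF Wc[OF \<omega>] tendsto_max[OF tendsto_const t]]) auto
  then show "(\<lambda>i. W (max 0 (real_of_int \<lfloor>real (Suc i) * snd p\<rfloor> / real (Suc i))) (fst p)) \<longlonglongrightarrow> W (max 0 (snd p)) (fst p)"
    by (simp add: ps t_def)
qed



lemma transl:
  fixes c :: "real^3" and \<theta> :: real
  shows "(\<integral>\<^sup>+x. psi_ext (ennreal \<theta> * inverse (ennreal ((norm (x + c))\<^sup>2))) \<partial>lborel)
       = (\<integral>\<^sup>+x. psi_ext (ennreal \<theta> * inverse (ennreal ((norm (x::real^3))\<^sup>2))) \<partial>lborel)"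
proof -
  let ?f = "\<lambda>x::real^3. psi_ext (ennreal \<theta> * inverse (ennreal ((norm x)\<^sup>2)))"
  have fm: "?f \<in> borel_measurable borel" by measurable
  have "(\<integral>\<^sup>+x. ?f x \<partial>lborel) = (\<integral>\<^sup>+x. ?f x \<partial>(distr lborel borel ((+) c)))"
    by (simp add: lborel_distr_plus)
  also have "\<dots> = (\<integral>\<^sup>+x. ?f (c + x) \<partial>lborel)"
    by (rule nn_integral_distr) (use fm in auto)
  also have "\<dots> = (\<integral>\<^sup>+x. ?f (x + c) \<partial>lborel)"
    by (simp add: add.commute)
  finally show ?thesis by (rule sym)
qed

theorem lemma4p1:
  fixes M :: "'a measure" and W :: "real \<Rightarrow> 'a \<Rightarrow> real^3" and \<theta> \<sigma> :: real
  assumes "std_BM3 M W" and "\<theta> > 0" and "\<sigma> > 0"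
  shows "(\<integral>\<^sup>+ x. (\<integral>\<^sup>+ \<omega>. psi_ext (ennreal \<theta> *
            (\<integral>\<^sup>+ s\<in>{0..1}. inverse (ennreal ((norm (x + \<sigma> *\<^sub>R W s \<omega>))\<^sup>2)) \<partial>lborel)) \<partial>M) \<partial>lborel)
         \<le> ennreal (8 / 3 * pi powr (3/2) * \<theta> powr (3/2))"
proof -
  have P: "prob_space M" and Wm: "\<And>t. W t \<in> borel_measurable M"
    and Wc: "\<And>\<omega>. \<omega> \<in> space M \<Longrightarrow> continuous_on {0..} (\<lambda>t. W t \<omega>)"
    using assms(1) unfolding std_BM3_def by auto
  interpret prob_space M by (rule P)
  define K where "K = ennreal (8 / 3 * pi powr (3/2) * \<theta> powr (3/2))"
  define V where "V = (\<lambda>s \<omega>. W (max 0 s) \<omega>)"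
  have Vm: "(\<lambda>p. V (snd p) (fst p)) \<in> borel_measurable (M \<Otimes>\<^sub>M lborel)"
    unfolding V_def by (rule joint_meas[OF Wm Wc])
  have Vm2[measurable]: "(\<lambda>p. V (snd p) (snd (fst p))) \<in> borel_measurable (((lborel::(real^3) measure) \<Otimes>\<^sub>M M) \<Otimes>\<^sub>M lborel)"
  proof -
    have "(\<lambda>p::((real^3) \<times> 'a) \<times> real. (snd (fst p), snd p)) \<in> measurable ((lborel \<Otimes>\<^sub>M M) \<Otimes>\<^sub>M lborel) (M \<Otimes>\<^sub>M lborel)"
      by measurable
    from measurable_compose[OF this Vm] show ?thesis by simp
  qed
  define h where "h = (\<lambda>(x::real^3) \<omega> (s::real). psi_ext (ennreal \<theta> * inverse (ennreal ((norm (x + \<sigma> *\<^sub>R V s \<omega>))\<^sup>2))) * indicator {0..1::real} s)"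
  have hm: "(\<lambda>p. h (fst (fst p)) (snd (fst p)) (snd p)) \<in> borel_measurable ((lborel \<Otimes>\<^sub>M M) \<Otimes>\<^sub>M lborel)"
    unfolding h_def by measurable
  have PS3: "pair_sigma_finite (lborel::(real^3) measure) M"
    by (simp add: pair_sigma_finite_def lborel.sigma_finite_measure_axioms prob_space_imp_sigma_finite P)
  have PS1: "pair_sigma_finite (lborel::(real^3) measure) (lborel::real measure)"
    by (simp add: pair_sigma_finite_def lborel.sigma_finite_measure_axioms)

  have step1: "psi_ext (ennreal \<theta> * (\<integral>\<^sup>+ s\<in>{0..1}. inverse (ennreal ((norm (x + \<sigma> *\<^sub>R W s \<omega>))\<^sup>2)) \<partial>lborel))
      \<le> (\<integral>\<^sup>+s. h x \<omega> s \<partial>lborel)" if \<omega>: "\<omega> \<in> space M" for x \<omega>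
  proof -
    let ?g = "\<lambda>s. inverse (ennreal ((norm (x + \<sigma> *\<^sub>R V s \<omega>))\<^sup>2))"
    have Vs: "(\<lambda>s. V s \<omega>) \<in> borel_measurable lborel"
      using measurable_Pair2[OF Vm \<omega>] by simp
    have gm[measurable]: "?g \<in> borel_measurable lborel"
      using Vs by measurable
    have "(\<integral>\<^sup>+ s\<in>{0..1}. inverse (ennreal ((norm (x + \<sigma> *\<^sub>R W s \<omega>))\<^sup>2)) \<partial>lborel)
        = (\<integral>\<^sup>+ s. ?g s * indicator {0..1} s \<partial>lborel)"
      by (intro nn_integral_cong) (auto simp: V_def indicator_def)
    then have "ennreal \<theta> * (\<integral>\<^sup>+ s\<in>{0..1}. inverse (ennreal ((norm (x + \<sigma> *\<^sub>R W s \<omega>))\<^sup>2)) \<partial>lborel)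
        = (\<integral>\<^sup>+ s. (ennreal \<theta> * ?g s) * indicator {0..1} s \<partial>lborel)"
      by (simp add: nn_integral_cmult[symmetric] mult.assoc)
    also have "psi_ext \<dots> \<le> (\<integral>\<^sup>+ s. psi_ext (ennreal \<theta> * ?g s) * indicator {0..1} s \<partial>lborel)"
      by (rule psi_jensen) measurable
    also have "\<dots> = (\<integral>\<^sup>+s. h x \<omega> s \<partial>lborel)"
      by (simp add: h_def)
    finally show ?thesis .
  qed

  have inner: "(\<integral>\<^sup>+x. (\<integral>\<^sup>+s. h x \<omega> s \<partial>lborel) \<partial>lborel) = K" if \<omega>: "\<omega> \<in> space M" for \<omega>
  proof -
    have cm: "(\<lambda>p::(real^3) \<times> real. ((fst p, \<omega>), snd p)) \<in> measurable (lborel \<Otimes>\<^sub>M lborel) ((lborel \<Otimes>\<^sub>M M) \<Otimes>\<^sub>M lborel)"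
      using \<omega> by measurable
    have hm2: "case_prod (\<lambda>x s. h x \<omega> s) \<in> borel_measurable (lborel \<Otimes>\<^sub>M lborel)"
      using measurable_compose[OF cm hm] by (simp add: case_prod_beta')
    have "(\<integral>\<^sup>+x. (\<integral>\<^sup>+s. h x \<omega> s \<partial>lborel) \<partial>lborel) = (\<integral>\<^sup>+s. (\<integral>\<^sup>+x. h x \<omega> s \<partial>lborel) \<partial>lborel)"
      by (rule pair_sigma_finite.Fubini'[OF PS1 hm2, symmetric])
    also have "\<dots> = (\<integral>\<^sup>+s. K * indicator {0..1::real} s \<partial>lborel)"
    proof (intro nn_integral_cong)
      fix s :: real
      have "(\<integral>\<^sup>+x. h x \<omega> s \<partial>lborel)
          = (\<integral>\<^sup>+x. psi_ext (ennreal \<theta> * inverse (ennreal ((norm (x + \<sigma> *\<^sub>R V s \<omega>))\<^sup>2))) \<partial>lborel) * indicator {0..1} s"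
        unfolding h_def by (rule nn_integral_multc) measurable
      also have "\<dots> = K * indicator {0..1::real} s"
        unfolding transl K_def using K_eq[OF assms(2)] by simp
      finally show "(\<integral>\<^sup>+x. h x \<omega> s \<partial>lborel) = K * indicator {0..1::real} s" .
    qed
    also have "\<dots> = K"
      by (simp add: nn_integral_cmult_indicator)
    finally show ?thesis .
  qed

  have "(\<integral>\<^sup>+ x. (\<integral>\<^sup>+ \<omega>. psi_ext (ennreal \<theta> *
            (\<integral>\<^sup>+ s\<in>{0..1}. inverse (ennreal ((norm (x + \<sigma> *\<^sub>R W s \<omega>))\<^sup>2)) \<partial>lborel)) \<partial>M) \<partial>lborel)
      \<le> (\<integral>\<^sup>+ x. (\<integral>\<^sup>+ \<omega>. (\<integral>\<^sup>+s. h x \<omega> s \<partial>lborel) \<partial>M) \<partial>lborel)"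
    by (intro nn_integral_mono step1)
  also have "\<dots> = (\<integral>\<^sup>+ \<omega>. (\<integral>\<^sup>+ x. (\<integral>\<^sup>+s. h x \<omega> s \<partial>lborel) \<partial>lborel) \<partial>M)"
  proof -
    have "(\<lambda>p. \<integral>\<^sup>+s. h (fst p) (snd p) s \<partial>lborel) \<in> borel_measurable (lborel \<Otimes>\<^sub>M M)"
      by (rule lborel.borel_measurable_nn_integral) (use hm in \<open>simp add: case_prod_beta'\<close>)
    then have m: "case_prod (\<lambda>x \<omega>. \<integral>\<^sup>+s. h x \<omega> s \<partial>lborel) \<in> borel_measurable (lborel \<Otimes>\<^sub>M M)"
      by (simp add: case_prod_beta')
    show ?thesis by (rule pair_sigma_finite.Fubini'[OF PS3 m, symmetric])
  qed
  also have "\<dots> = (\<integral>\<^sup>+ \<omega>. K \<partial>M)"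
    by (intro nn_integral_cong inner)
  also have "\<dots> = K" by (simp add: emeasure_space_1)
  finally show ?thesis unfolding K_def .
qed


end
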